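(* Let $\Gamma=G_3$ be the graph with two vertices $V_\alpha,V_\beta$ joined by exactly three edges (no loops), with degrees $d_\alpha,d_\beta\in\mathbb{Z}$. The family $\mathcal{F}(G_3,(d_\alpha,d_\beta))$ is jumping if and only if $0\le d_\alpha\le 1$ and $0\le d_\beta\le 1$.
   Context: Let $\Gamma$ be a connected graph (loops and multiple edges allowed) with vertices $V_1,\dots,V_n$ and integers $d_1,\dots,d_n$. A nodal curve with dual graph $\Gamma$ and rational components is a curve $C$ obtained from the disjoint union of copies $\mathbb{P}^1_{V_i}$ of $\mathbb{P}^1$ by choosing, for each edge of $\Gamma$, a point on each of its endpoint copies (all chosen points distinct) and identifying these two points to a node. A line bundle on $C$ is equivalent to line bundles on each $\mathbb{P}^1_{V_i}$ together with, at each node, an identification of the two fibres (descent data, a scalar in $\mathbb{C}^*$ after trivialising); global sections are tuples of sections on the $\mathbb{P}^1$'s compatible with these identifications. The family $\mathcal{F}(\Gamma,(d_i))$ consists of all pairs $(C,L)$ with $C$ such a curve (any choice of node positions) and $L$ a line bundle on $C$ whose pullback to $\mathbb{P}^1_{V_i}$ has degree $d_i$ for all $i$ (any descent data). $\Gamma$ with degrees $(d_i)$ is called jumping if $h^0(C,L)$ is not constant on $\mathcal{F}(\Gamma,(d_i))$, and non-jumping otherwise. *)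

theory Defs
  imports "HOL-Computational_Algebra.Polynomial" "HOL-Library.Product_Plus"
begin

text \<open>Global sections of O(d) on P^1: binary forms of degree d in (x,y), encoded by the
  dehomogenised univariate polynomial (coefficient of x^k y^(d-k) is coeff f k).
  For d < 0 the only section is 0.\<close>
definition forms :: "int \<Rightarrow> complex poly set" where
  "forms d = {f. if d < 0 then f = 0 else degree f \<le> nat d}"

text \<open>Value of the binary form of degree d at the representative (a,b) of a point of P^1
  (this trivialises the fibre of O(d) at (a:b)).\<close>
definition form_eval :: "int \<Rightarrow> complex poly \<Rightarrow> complex \<times> complex \<Rightarrow> complex" where
  "form_eval d f v = (\<Sum>k\<le>nat d. coeff f k * fst v ^ k * snd v ^ (nat d - k))"

text \<open>Points of P^1 given by nonzero representatives; distinctness in P^1.\<close>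
definition proj_distinct :: "complex \<times> complex \<Rightarrow> complex \<times> complex \<Rightarrow> bool" where
  "proj_distinct v w \<longleftrightarrow> fst v * snd w \<noteq> snd v * fst w"

text \<open>A member of the family F(G_3,(da,db)): node positions p i on P^1_alpha, q i on P^1_beta
  (i < 3, one per edge, distinct on each component) and descent scalars lam i \<noteq> 0.\<close>
definition G3_config :: "(nat \<Rightarrow> complex \<times> complex) \<Rightarrow> (nat \<Rightarrow> complex \<times> complex)
    \<Rightarrow> (nat \<Rightarrow> complex) \<Rightarrow> bool" where
  "G3_config p q lam \<longleftrightarrow>
     (\<forall>i<3. p i \<noteq> (0,0) \<and> q i \<noteq> (0,0) \<and> lam i \<noteq> 0) \<and>
     (\<forall>i<3. \<forall>j<3. i \<noteq> j \<longrightarrow> proj_distinct (p i) (p j) \<and> proj_distinct (q i) (q j))"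

text \<open>Global sections of the line bundle: compatible pairs of sections on the two components.\<close>
definition G3_sections :: "int \<Rightarrow> int \<Rightarrow> (nat \<Rightarrow> complex \<times> complex) \<Rightarrow> (nat \<Rightarrow> complex \<times> complex)
    \<Rightarrow> (nat \<Rightarrow> complex) \<Rightarrow> (complex poly \<times> complex poly) set" where
  "G3_sections da db p q lam =
     {(f, g). f \<in> forms da \<and> g \<in> forms db \<and>
        (\<forall>i<3. form_eval da f (p i) = lam i * form_eval db g (q i))}"

definition pair_smult :: "complex \<Rightarrow> complex poly \<times> complex poly \<Rightarrow> complex poly \<times> complex poly" where
  "pair_smult c x = (smult c (fst x), smult c (snd x))"

definition G3_h0 :: "int \<Rightarrow> int \<Rightarrow> (nat \<Rightarrow> complex \<times> complex) \<Rightarrow> (nat \<Rightarrow> complex \<times> complex)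
    \<Rightarrow> (nat \<Rightarrow> complex) \<Rightarrow> nat" where
  "G3_h0 da db p q lam = vector_space.dim pair_smult (G3_sections da db p q lam)"

definition G3_jumping :: "int \<Rightarrow> int \<Rightarrow> bool" where
  "G3_jumping da db \<longleftrightarrow>
     (\<exists>p q lam p' q' lam'. G3_config p q lam \<and> G3_config p' q' lam' \<and>
        G3_h0 da db p q lam \<noteq> G3_h0 da db p' q' lam')"

end

theory Submission
  imports Defs
begin



lemma forms_0[simp]: "0 \<in> forms d"
  by (simp add: forms_def)

lemma forms_neg: "d < 0 \<Longrightarrow> f \<in> forms d \<longleftrightarrow> f = 0"
  by (simp add: forms_def)

lemma forms_nonneg: "0 \<le> d \<Longrightarrow> f \<in> forms d \<longleftrightarrow> degree f \<le> nat d"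
  by (simp add: forms_def)

lemma forms_add: "f \<in> forms d \<Longrightarrow> g \<in> forms d \<Longrightarrow> f + g \<in> forms d"
  by (auto simp: forms_def intro: order.trans[OF degree_add_le])

lemma forms_smult: "f \<in> forms d \<Longrightarrow> smult c f \<in> forms d"
  by (auto simp: forms_def intro: order.trans[OF degree_smult_le])

lemma forms_minus: "f \<in> forms d \<Longrightarrow> - f \<in> forms d"
  by (auto simp: forms_def)

lemma forms_diff: "f \<in> forms d \<Longrightarrow> g \<in> forms d \<Longrightarrow> f - g \<in> forms d"
  using forms_add[of f d "-g"] forms_minus[of g d] by simp

lemma forms_sum: "(\<And>i. i \<in> I \<Longrightarrow> f i \<in> forms d) \<Longrightarrow> (\<Sum>i\<in>I. f i) \<in> forms d"
  by (induction I rule: infinite_finite_induct) (auto intro: forms_add)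

lemma forms_mult: "f \<in> forms d1 \<Longrightarrow> h \<in> forms d2 \<Longrightarrow> f * h \<in> forms (d1 + d2)"
proof -
  assume f: "f \<in> forms d1" and h: "h \<in> forms d2"
  show ?thesis
  proof (cases "d1 < 0 \<or> d2 < 0")
    case True
    then have "f * h = 0" using f h by (auto simp: forms_neg)
    then show ?thesis by (simp only: forms_0)
  next
    case False
    then have "degree f \<le> nat d1" "degree h \<le> nat d2" using f h by (auto simp: forms_def)
    then have "degree (f*h) \<le> nat (d1 + d2)"
      using degree_mult_le[of f h] False by linarith
    then show ?thesis using False by (simp add: forms_def)
  qed
qed

lemma form_eval_0[simp]: "form_eval d 0 v = 0"
  by (simp add: form_eval_def)

lemma form_eval_add: "form_eval d (f + g) v = form_eval d f v + form_eval d g v"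
  by (simp add: form_eval_def algebra_simps sum.distrib)

lemma form_eval_smult: "form_eval d (smult c f) v = c * form_eval d f v"
  by (simp add: form_eval_def algebra_simps sum_distrib_left)

lemma form_eval_minus: "form_eval d (- f) v = - form_eval d f v"
  by (simp add: form_eval_def sum_negf)

lemma form_eval_diff: "form_eval d (f - g) v = form_eval d f v - form_eval d g v"
  using form_eval_add[of d f "-g" v] form_eval_minus[of d g v] by simp

lemma form_eval_sum: "form_eval d (\<Sum>i\<in>I. f i) v = (\<Sum>i\<in>I. form_eval d (f i) v)"
  by (induction I rule: infinite_finite_induct) (auto simp: form_eval_add)

lemma form_eval_forms_neg: "d < 0 \<Longrightarrow> f \<in> forms d \<Longrightarrow> form_eval d f v = 0"
  by (simp add: forms_neg)

lemma form_eval_b0: "form_eval d f (a, 0) = coeff f (nat d) * a ^ nat d"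
proof -
  have "form_eval d f (a, 0) = (\<Sum>k\<in>{nat d}. coeff f k * a ^ k * 0 ^ (nat d - k))"
    unfolding form_eval_def fst_conv snd_conv by (rule sum.mono_neutral_right) (auto simp: zero_power)
  then show ?thesis by simp
qed

lemma form_eval_bnz:
  assumes "0 \<le> d" "f \<in> forms d" "b \<noteq> 0"
  shows "form_eval d f (a, b) = b ^ nat d * poly f (a / b)"
proof -
  have deg: "degree f \<le> nat d" using assms by (simp add: forms_def)
  have "poly f (a/b) = (\<Sum>k\<le>degree f. coeff f k * (a/b) ^ k)" by (simp add: poly_altdef)
  also have "\<dots> = (\<Sum>k\<le>nat d. coeff f k * (a/b) ^ k)"
    by (rule sum.mono_neutral_left) (use deg in \<open>auto simp: coeff_eq_0\<close>)
  finally have "b ^ nat d * poly f (a / b) = (\<Sum>k\<le>nat d. coeff f k * (b ^ nat d * (a/b) ^ k))"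
    by (simp add: sum_distrib_left algebra_simps)
  also have "\<dots> = (\<Sum>k\<le>nat d. coeff f k * a ^ k * b ^ (nat d - k))"
  proof (rule sum.cong[OF refl])
    fix k assume "k \<in> {..nat d}"
    then have "b ^ nat d = b ^ k * b ^ (nat d - k)" by (simp add: power_add[symmetric])
    then have "b ^ nat d * (a/b) ^ k = a ^ k * b ^ (nat d - k)"
      using assms(3) by (simp add: power_divide field_simps)
    then show "coeff f k * (b ^ nat d * (a/b) ^ k) = coeff f k * a ^ k * b ^ (nat d - k)" by simp
  qed
  finally show ?thesis by (simp add: form_eval_def)
qed

lemma coeff_mult_bound:
  assumes "degree f \<le> m" "degree h \<le> n"
  shows "coeff (f * h) (m + n) = coeff f m * coeff h n"
proof (cases "degree f = m \<and> degree h = n")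
  case True then show ?thesis using coeff_mult_degree_sum[of f h] by simp
next
  case False
  then have "degree f < m \<or> degree h < n" using assms by auto
  moreover have "degree (f*h) \<le> degree f + degree h" by (rule degree_mult_le)
  ultimately show ?thesis using assms by (auto simp: coeff_eq_0)
qed

lemma form_eval_mult:
  assumes f: "f \<in> forms d1" and h: "h \<in> forms d2"
  shows "form_eval (d1 + d2) (f * h) v = form_eval d1 f v * form_eval d2 h v"
proof (cases "d1 < 0 \<or> d2 < 0")
  case True
  then have "f = 0 \<or> h = 0" using f h by (auto simp: forms_neg)
  then show ?thesis by auto
next
  case False
  obtain a b where v: "v = (a, b)" by (cases v)
  have fh: "f * h \<in> forms (d1 + d2)" using forms_mult[OF f h] .
  show ?thesis
  proof (cases "b = 0")
    case True
    have "degree f \<le> nat d1" "degree h \<le> nat d2" using f h False by (auto simp: forms_def)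
    moreover have "nat (d1 + d2) = nat d1 + nat d2" using False by (simp add: nat_add_distrib)
    ultimately show ?thesis using True v
      by (simp add: form_eval_b0 coeff_mult_bound power_add)
  next
    case nz: False
    have "nat (d1 + d2) = nat d1 + nat d2" using False by (simp add: nat_add_distrib)
    then show ?thesis using nz v False fh f h
      by (simp add: form_eval_bnz power_add)
  qed
qed

lemma form_eval_lin: "form_eval 1 [:x, y:] (a, b) = x * b + y * a"
  by (simp add: form_eval_def)

lemma forms_lin: "[:x, y:] \<in> forms 1"
  by (simp add: forms_def)




definition lin :: "complex \<times> complex \<Rightarrow> complex poly" where
  "lin v = [:- fst v, snd v:]"

lemma lin_forms: "lin v \<in> forms 1"
  by (simp add: lin_def forms_def)

lemma eval_lin: "form_eval 1 (lin v) w = snd v * fst w - fst v * snd w"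
  by (simp add: lin_def form_eval_def)

lemma lin_nz: "v \<noteq> (0,0) \<Longrightarrow> lin v \<noteq> 0"
  by (cases v) (auto simp: lin_def)

lemma factor1:
  assumes f: "f \<in> forms d" and v: "v \<noteq> (0,0)" and ev: "form_eval d f v = 0"
  shows "\<exists>h \<in> forms (d - 1). f = lin v * h"
proof (cases "f = 0")
  case True then show ?thesis by (intro bexI[of _ 0]) auto
next
  case fnz: False
  then have d: "0 \<le> d" using f forms_neg[of d f] by linarith
  have degf: "degree f \<le> nat d" using f d by (simp add: forms_def)
  obtain a b where vab: "v = (a, b)" by (cases v)
  show ?thesis
  proof (cases "b = 0")
    case True
    then have a: "a \<noteq> 0" using v vab by auto
    have "coeff f (nat d) = 0" using ev vab True a by (simp add: form_eval_b0)
    then have "degree f \<noteq> nat d" using fnz by (metis leading_coeff_0_iff)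
    then have "degree f < nat d" using degf by simp
    then have "degree (smult (-1/a) f) \<le> nat (d - 1)" using a by simp
    then have hf: "smult (-1/a) f \<in> forms (d - 1)"
      using \<open>degree f < nat d\<close> by (simp add: forms_def)
    have "lin v * smult (-1/a) f = f"
      using a vab True by (simp add: lin_def)
    then show ?thesis using hf by metis
  next
    case bnz: False
    have "b ^ nat d * poly f (a / b) = 0" using ev vab d f bnz by (simp add: form_eval_bnz)
    then have "poly f (a/b) = 0" using bnz by simp
    then have "[:- (a/b), 1:] dvd f" by (simp add: poly_eq_0_iff_dvd)
    then obtain k where k: "f = [:- (a/b), 1:] * k" by (auto elim: dvdE)
    then have knz: "k \<noteq> 0" using fnz by auto
    have "degree ([:- (a/b), 1:] * k) = degree [:- (a/b), 1:] + degree k"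
      by (rule degree_mult_eq) (use knz in auto)
    then have "degree f = 1 + degree k" using k by simp
    then have "degree (smult (1/b) k) \<le> nat (d - 1)" "d - 1 \<ge> 0" using degf bnz by auto
    then have hf: "smult (1/b) k \<in> forms (d - 1)" by (simp add: forms_def)
    have "lin v = smult b [:- (a/b), 1:]" using vab bnz by (simp add: lin_def)
    then have "lin v * smult (1/b) k = smult (1/b * b) ([:- (a/b), 1:] * k)"
      by (simp only: mult_smult_left mult_smult_right smult_smult)
    then have "lin v * smult (1/b) k = f" using k bnz by simp
    then show ?thesis using hf by metis
  qed
qed

lemma eval_lin_self: "form_eval 1 (lin v) v = 0"
  by (simp add: eval_lin mult.commute)

lemma eval_lin_distinct: "proj_distinct v w \<Longrightarrow> form_eval 1 (lin v) w \<noteq> 0"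
  by (simp add: eval_lin proj_distinct_def mult.commute)

lemma factor3:
  assumes f: "f \<in> forms d"
    and nz: "x \<noteq> (0,0)" "y \<noteq> (0,0)" "z \<noteq> (0,0)"
    and dist: "proj_distinct x y" "proj_distinct x z" "proj_distinct y z"
    and ev: "form_eval d f x = 0" "form_eval d f y = 0" "form_eval d f z = 0"
  shows "\<exists>h \<in> forms (d - 3). f = lin x * lin y * lin z * h"
proof -
  obtain h1 where h1: "h1 \<in> forms (d - 1)" "f = lin x * h1" using factor1[OF f nz(1) ev(1)] by blast
  have "form_eval d f y = form_eval 1 (lin x) y * form_eval (d - 1) h1 y"
    using form_eval_mult[OF lin_forms h1(1), of x y] h1(2) by simp
  then have "form_eval (d - 1) h1 y = 0" using ev(2) eval_lin_distinct[OF dist(1)] by simp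
  then obtain h2 where h2: "h2 \<in> forms (d - 1 - 1)" "h1 = lin y * h2"
    using factor1[OF h1(1) nz(2)] by blast
  have "form_eval d f z = form_eval 1 (lin x) z * form_eval (d - 1) h1 z"
    using form_eval_mult[OF lin_forms h1(1), of x z] h1(2) by simp
  moreover have "form_eval (d - 1) h1 z = form_eval 1 (lin y) z * form_eval (d - 1 - 1) h2 z"
    using form_eval_mult[OF lin_forms h2(1), of y z] h2(2) by simp
  ultimately have "form_eval (d - 1 - 1) h2 z = 0"
    using ev(3) eval_lin_distinct[OF dist(2)] eval_lin_distinct[OF dist(3)] by simp
  then obtain h3 where h3: "h3 \<in> forms (d - 1 - 1 - 1)" "h2 = lin z * h3"
    using factor1[OF h2(1) nz(3)] by blast
  have "d - 1 - 1 - 1 = d - 3" by simp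
  then show ?thesis using h1 h2 h3 by (metis mult.assoc)
qed




lemma pair_smult_vs: "vector_space pair_smult"
  by unfold_locales (auto simp: pair_smult_def smult_add_right smult_add_left)

interpretation V: vector_space pair_smult by (rule pair_smult_vs)

lemma V_dim_image_eq:
  assumes lf: "Vector_Spaces.linear pair_smult pair_smult f"
    and fi: "inj_on f (V.span S)"
  shows "V.dim (f ` S) = V.dim S"
proof -
  interpret lf: Vector_Spaces.linear pair_smult pair_smult f by fact
  obtain B where B: "B \<subseteq> S" "V.independent B" "S \<subseteq> V.span B" "card B = V.dim S"
    using V.basis_exists[of S] by auto
  then have "V.span S = V.span B"
    using V.span_mono[of B S] V.span_mono[of S "V.span B"] V.span_span[of B] by auto
  moreover have "card (f ` B) = card B"
    using assms card_image[of f B] inj_on_subset[of f "V.span S" B] B V.span_superset by auto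
  moreover have "(f ` B) \<subseteq> (f ` S)"
    using B by auto
  ultimately show ?thesis
    by (metis B(2) B(4) fi lf.dependent_inj_imageD lf.span_image V.dim_eq_card_independent V.dim_span)
qed

lemma linear_pairI:
  assumes "\<And>x y. f (x + y) = f x + f y" "\<And>c x. f (pair_smult c x) = pair_smult c (f x)"
  shows "Vector_Spaces.linear pair_smult pair_smult f"
  using assms pair_smult_vs by (simp add: Vector_Spaces.linear_iff)

lemma subspace_forms: "V.subspace (forms d1 \<times> forms d2)"
  unfolding V.subspace_def
  by (auto simp: pair_smult_def zero_prod_def intro: forms_add forms_smult)

lemma span_forms: "V.span (forms d1 \<times> forms d2) = forms d1 \<times> forms d2"
  using subspace_forms V.span_eq_iff by blast

lemma smult_sum_right: "smult c (\<Sum>i\<in>I. f i) = (\<Sum>i\<in>I. smult c (f i))"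
  by (induction I rule: infinite_finite_induct) (auto simp: smult_add_right)

lemma forms_mult': "f \<in> forms d1 \<Longrightarrow> h \<in> forms d2 \<Longrightarrow> d = d1 + d2 \<Longrightarrow> f * h \<in> forms d"
  using forms_mult by blast

lemma form_eval_mult': "f \<in> forms d1 \<Longrightarrow> h \<in> forms d2 \<Longrightarrow> d = d1 + d2 \<Longrightarrow>
   form_eval d (f * h) v = form_eval d1 f v * form_eval d2 h v"
  using form_eval_mult by blast

lemma lin_pow: "lin v ^ n \<in> forms (int n) \<and> form_eval (int n) (lin v ^ n) w = (form_eval 1 (lin v) w) ^ n"
proof (induction n)
  case 0
  then show ?case by (simp add: forms_def form_eval_def)
next
  case (Suc n)
  have "lin v ^ Suc n = lin v * lin v ^ n" by simp
  moreover have "int (Suc n) = 1 + int n" by simp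
  ultimately show ?case using Suc lin_forms[of v]
    by (metis forms_mult' form_eval_mult' power_Suc)
qed

definition cub :: "complex \<times> complex \<Rightarrow> complex \<times> complex \<Rightarrow> complex \<times> complex \<Rightarrow> complex poly" where
  "cub x y z = lin x * lin y * lin z"

lemma cub_forms: "cub x y z \<in> forms 3"
proof -
  have "lin x * lin y \<in> forms 2" by (rule forms_mult'[OF lin_forms lin_forms]) simp
  then show ?thesis unfolding cub_def by (rule forms_mult'[OF _ lin_forms]) simp
qed

lemma cub_eval: "form_eval 3 (cub x y z) w = form_eval 1 (lin x) w * form_eval 1 (lin y) w * form_eval 1 (lin z) w"
proof -
  have a: "lin x * lin y \<in> forms 2" by (rule forms_mult'[OF lin_forms lin_forms]) simp
  have "form_eval 3 (cub x y z) w = form_eval 2 (lin x * lin y) w * form_eval 1 (lin z) w"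
    unfolding cub_def by (rule form_eval_mult'[OF a lin_forms]) simp
  also have "form_eval 2 (lin x * lin y) w = form_eval 1 (lin x) w * form_eval 1 (lin y) w"
    by (rule form_eval_mult'[OF lin_forms lin_forms]) simp
  finally show ?thesis .
qed

lemma cub_nz: "x \<noteq> (0,0) \<Longrightarrow> y \<noteq> (0,0) \<Longrightarrow> z \<noteq> (0,0) \<Longrightarrow> cub x y z \<noteq> 0"
  by (simp add: cub_def lin_nz)

lemma interp1:
  assumes d: "2 \<le> d" and xy: "proj_distinct y x" and xz: "proj_distinct z x"
  shows "\<exists>e\<in>forms d. form_eval d e x = 1 \<and> form_eval d e y = 0 \<and> form_eval d e z = 0"
proof -
  define n where "n = nat d - 1"
  have dn: "d = int n + 1" and n1: "n \<ge> 1" using d by (auto simp: n_def)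
  define e where "e = lin y ^ n * lin z"
  have ef: "e \<in> forms d" unfolding e_def
    by (rule forms_mult'[OF conjunct1[OF lin_pow] lin_forms dn])
  have ev: "form_eval d e w = form_eval 1 (lin y) w ^ n * form_eval 1 (lin z) w" for w
    unfolding e_def using form_eval_mult'[OF conjunct1[OF lin_pow] lin_forms dn] lin_pow by metis
  define c where "c = form_eval d e x"
  have c: "c \<noteq> 0" unfolding c_def ev using eval_lin_distinct[OF xy] eval_lin_distinct[OF xz] by simp
  have "smult (1/c) e \<in> forms d" using ef by (rule forms_smult)
  moreover have "form_eval d (smult (1/c) e) x = 1" using c by (simp add: form_eval_smult c_def)
  moreover have "form_eval d (smult (1/c) e) y = 0"
    using n1 by (simp add: form_eval_smult ev eval_lin_self)
  moreover have "form_eval d (smult (1/c) e) z = 0"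
    by (simp add: form_eval_smult ev eval_lin_self)
  ultimately show ?thesis by blast
qed

lemma less3: "(i::nat) < 3 \<longleftrightarrow> i = 0 \<or> i = 1 \<or> i = 2" by auto

lemma config_nz: "G3_config p q lam \<Longrightarrow> i < 3 \<Longrightarrow> p i \<noteq> (0,0) \<and> q i \<noteq> (0,0) \<and> lam i \<noteq> 0"
  by (simp add: G3_config_def)

lemma config_dist: "G3_config p q lam \<Longrightarrow> i < 3 \<Longrightarrow> j < 3 \<Longrightarrow> i \<noteq> j \<Longrightarrow>
   proj_distinct (p i) (p j) \<and> proj_distinct (q i) (q j)"
  by (simp add: G3_config_def)

lemma interp3:
  assumes d: "2 \<le> d" and c: "G3_config p q lam"
  shows "\<exists>E. \<forall>i<3. E i \<in> forms d \<and> (\<forall>j<3. form_eval d (E i) (p j) = (if i = j then 1 else 0))"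
proof -
  have "\<forall>i<3. \<exists>e. e \<in> forms d \<and> (\<forall>j<3. form_eval d e (p j) = (if i = j then 1 else 0))"
  proof (intro allI impI)
    fix i :: nat assume i: "i < 3"
    have D: "proj_distinct (p a) (p b)" if "a < 3" "b < 3" "a \<noteq> b" for a b
      using config_dist[OF c that] by simp
    have d10: "proj_distinct (p 1) (p 0)" by (rule D) auto
    have d20: "proj_distinct (p 2) (p 0)" by (rule D) auto
    have d01: "proj_distinct (p 0) (p 1)" by (rule D) auto
    have d21: "proj_distinct (p 2) (p 1)" by (rule D) auto
    have d02: "proj_distinct (p 0) (p 2)" by (rule D) auto
    have d12: "proj_distinct (p 1) (p 2)" by (rule D) auto
    show "\<exists>e. e \<in> forms d \<and> (\<forall>j<3. form_eval d e (p j) = (if i = j then 1 else 0))"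
    proof -
      consider "i = 0" | "i = 1" | "i = 2" using i by (auto simp only: less3)
      then show ?thesis
      proof cases
        case 1
        obtain e where "e \<in> forms d" "form_eval d e (p 0) = 1" "form_eval d e (p 1) = 0" "form_eval d e (p 2) = 0"
          using interp1[OF d d10 d20] by blast
        then show ?thesis using 1 by (intro exI[of _ e]) (auto dest!: less3[THEN iffD1])
      next
        case 2
        obtain e where "e \<in> forms d" "form_eval d e (p 1) = 1" "form_eval d e (p 0) = 0" "form_eval d e (p 2) = 0"
          using interp1[OF d d01 d21] by blast
        then show ?thesis using 2 by (intro exI[of _ e]) (auto dest!: less3[THEN iffD1])
      next
        case 3
        obtain e where "e \<in> forms d" "form_eval d e (p 2) = 1" "form_eval d e (p 0) = 0" "form_eval d e (p 1) = 0"
          using interp1[OF d d02 d12] by blast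
        then show ?thesis using 3 by (intro exI[of _ e]) (auto dest!: less3[THEN iffD1])
      qed
    qed
  qed
  then show ?thesis by metis
qed




lemma sum3: "(\<Sum>i<(3::nat). f i) = f 0 + f 1 + (f 2 :: 'a::comm_monoid_add)"
  by (simp add: numeral_3_eq_3 numeral_2_eq_2 lessThan_Suc add.commute add.left_commute)

lemma h0_ge2:
  assumes da: "2 \<le> da" and c: "G3_config p q lam"
  shows "G3_h0 da db p q lam = V.dim (forms (da - 3) \<times> forms db)"
proof -
  obtain E where E: "\<forall>i<3. E i \<in> forms da \<and> (\<forall>j<3. form_eval da (E i) (p j) = (if i = j then 1 else 0))"
    using interp3[OF da c] by blast
  define cp where "cp = cub (p 0) (p 1) (p 2)"
  define s where "s g = (\<Sum>i<3. smult (lam i * form_eval db g (q i)) (E i))" for g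
  define T where "T = (\<lambda>x. (cp * fst x + s (snd x), snd x))"
  define S0 where "S0 = forms (da - 3) \<times> forms db"
  have nz: "p i \<noteq> (0,0)" if "i < 3" for i using config_nz[OF c that] by simp
  have cpnz: "cp \<noteq> 0" unfolding cp_def using nz[of 0] nz[of 1] nz[of 2] by (intro cub_nz) auto
  have s_forms: "s g \<in> forms da" for g
    unfolding s_def by (rule forms_sum) (use E in \<open>auto intro: forms_smult\<close>)
  have s_eval: "form_eval da (s g) (p j) = lam j * form_eval db g (q j)" if j: "j < 3" for g j
  proof -
    have "form_eval da (s g) (p j) = (\<Sum>i<3. lam i * form_eval db g (q i) * (if i = j then 1 else 0))"
      unfolding s_def form_eval_sum form_eval_smult by (rule sum.cong) (use E j in auto)
    then show ?thesis using j by (simp add: sum3 less3) (auto simp: less3)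
  qed
  have s_add: "s (g + g') = s g + s g'" for g g'
    by (simp add: s_def form_eval_add distrib_left distrib_right smult_add_left sum.distrib)
  have s_smult: "s (smult c g) = smult c (s g)" for c g
    by (simp add: s_def form_eval_smult smult_sum_right smult_smult mult_ac)
  have cp_eval: "form_eval da (cp * h) (p j) = 0" if "h \<in> forms (da - 3)" "j < 3" for h j
  proof -
    have "form_eval da (cp * h) (p j) = form_eval 3 cp (p j) * form_eval (da - 3) h (p j)"
      unfolding cp_def by (rule form_eval_mult'[OF cub_forms that(1)]) simp
    moreover have "form_eval 3 cp (p j) = 0"
      using that(2) unfolding cp_def cub_eval by (auto simp: less3 eval_lin_self)
    ultimately show ?thesis by simp
  qed
  have cp_forms: "cp * h \<in> forms da" if "h \<in> forms (da - 3)" for h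
    unfolding cp_def by (rule forms_mult'[OF cub_forms that]) simp
  have sec: "G3_sections da db p q lam = T ` S0"
  proof (intro equalityI subsetI)
    fix x assume "x \<in> G3_sections da db p q lam"
    then obtain f g where x: "x = (f, g)" and f: "f \<in> forms da" and g: "g \<in> forms db"
      and ev: "\<forall>i<3. form_eval da f (p i) = lam i * form_eval db g (q i)"
      by (auto simp: G3_sections_def)
    have fs: "f - s g \<in> forms da" using f s_forms by (rule forms_diff)
    have z: "form_eval da (f - s g) (p j) = 0" if "j < 3" for j
      using ev that s_eval by (simp add: form_eval_diff)
    have D: "proj_distinct (p a) (p b)" if "a < 3" "b < 3" "a \<noteq> b" for a b
      using config_dist[OF c that] by simp
    have D01: "proj_distinct (p 0) (p 1)" by (rule D) auto
    have D02: "proj_distinct (p 0) (p 2)" by (rule D) auto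
    have D12: "proj_distinct (p 1) (p 2)" by (rule D) auto
    obtain h where h: "h \<in> forms (da - 3)" "f - s g = lin (p 0) * lin (p 1) * lin (p 2) * h"
      using factor3[OF fs nz[of 0] nz[of 1] nz[of 2] D01 D02 D12 z[of 0] z[of 1] z[of 2]] by auto
    have "x = T (h, g)" using h x unfolding T_def cp_def cub_def by (simp add: algebra_simps)
    moreover have "(h, g) \<in> S0" using h g by (simp add: S0_def)
    ultimately show "x \<in> T ` S0" by blast
  next
    fix x assume "x \<in> T ` S0"
    then obtain h g where x: "x = T (h, g)" and h: "h \<in> forms (da - 3)" and g: "g \<in> forms db"
      by (auto simp: S0_def)
    show "x \<in> G3_sections da db p q lam"
      unfolding x T_def G3_sections_def
      using h g cp_forms[OF h] s_forms cp_eval[OF h] s_eval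
      by (auto intro: forms_add simp: form_eval_add)
  qed
  have lin: "Vector_Spaces.linear pair_smult pair_smult T"
    by (rule linear_pairI) (auto simp: T_def s_add s_smult pair_smult_def algebra_simps smult_add_right)
  have inj: "inj_on T (V.span S0)"
    unfolding S0_def span_forms
  proof (rule inj_onI)
    fix x y assume "T x = T y"
    then have "snd x = snd y" and "cp * fst x = cp * fst y" by (auto simp: T_def)
    then show "x = y" using cpnz by (simp add: prod_eq_iff)
  qed
  show ?thesis
    using V_dim_image_eq[OF lin inj] sec by (simp add: G3_h0_def S0_def)
qed

lemma h0_neg:
  assumes da: "da < 0" and c: "G3_config p q lam"
  shows "G3_h0 da db p q lam = V.dim (forms da \<times> forms (db - 3))"
proof -
  define cq where "cq = cub (q 0) (q 1) (q 2)"
  define T :: "complex poly \<times> complex poly \<Rightarrow> complex poly \<times> complex poly"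
    where "T = (\<lambda>x. (fst x, cq * snd x))"
  define S0 where "S0 = forms da \<times> forms (db - 3)"
  have nz: "q i \<noteq> (0,0)" "lam i \<noteq> 0" if "i < 3" for i using config_nz[OF c that] by simp_all
  have cqnz: "cq \<noteq> 0" unfolding cq_def using nz(1)[of 0] nz(1)[of 1] nz(1)[of 2] by (intro cub_nz) auto
  have cq_eval: "form_eval db (cq * h) (q j) = 0" if "h \<in> forms (db - 3)" "j < 3" for h j
  proof -
    have "form_eval db (cq * h) (q j) = form_eval 3 cq (q j) * form_eval (db - 3) h (q j)"
      unfolding cq_def by (rule form_eval_mult'[OF cub_forms that(1)]) simp
    moreover have "form_eval 3 cq (q j) = 0"
      using that(2) unfolding cq_def cub_eval by (auto simp: less3 eval_lin_self)
    ultimately show ?thesis by simp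
  qed
  have cq_forms: "cq * h \<in> forms db" if "h \<in> forms (db - 3)" for h
    unfolding cq_def by (rule forms_mult'[OF cub_forms that]) simp
  have sec: "G3_sections da db p q lam = T ` S0"
  proof (intro equalityI subsetI)
    fix x assume "x \<in> G3_sections da db p q lam"
    then obtain f g where x: "x = (f, g)" and f: "f \<in> forms da" and g: "g \<in> forms db"
      and ev: "\<forall>i<3. form_eval da f (p i) = lam i * form_eval db g (q i)"
      by (auto simp: G3_sections_def)
    have f0: "f = 0" using f da by (simp add: forms_neg)
    have z: "form_eval db g (q j) = 0" if "j < 3" for j
      using ev that nz f0 by auto
    have D: "proj_distinct (q a) (q b)" if "a < 3" "b < 3" "a \<noteq> b" for a b
      using config_dist[OF c that] by simp
    have D01: "proj_distinct (q 0) (q 1)" by (rule D) auto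
    have D02: "proj_distinct (q 0) (q 2)" by (rule D) auto
    have D12: "proj_distinct (q 1) (q 2)" by (rule D) auto
    obtain h where h: "h \<in> forms (db - 3)" "g = lin (q 0) * lin (q 1) * lin (q 2) * h"
      using factor3[OF g nz(1)[of 0] nz(1)[of 1] nz(1)[of 2] D01 D02 D12 z[of 0] z[of 1] z[of 2]] by auto
    have "x = T (f, h)" using h x unfolding T_def cq_def cub_def by simp
    moreover have "(f, h) \<in> S0" using h f by (simp add: S0_def)
    ultimately show "x \<in> T ` S0" by blast
  next
    fix x assume "x \<in> T ` S0"
    then obtain f h where x: "x = T (f, h)" and h: "h \<in> forms (db - 3)" and f: "f \<in> forms da"
      by (auto simp: S0_def)
    have f0: "f = 0" using f da by (simp add: forms_neg)
    show "x \<in> G3_sections da db p q lam"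
      unfolding x T_def G3_sections_def
      using h f f0 cq_forms[OF h] cq_eval[OF h] by auto
  qed
  have lin: "Vector_Spaces.linear pair_smult pair_smult T"
    by (rule linear_pairI) (auto simp: T_def pair_smult_def algebra_simps mult_smult_right)
  have inj: "inj_on T (V.span S0)"
    unfolding S0_def span_forms
  proof (rule inj_onI)
    fix x y assume "T x = T y"
    then have "fst x = fst y" and "cq * snd x = cq * snd y" by (auto simp: T_def)
    then show "x = y" using cqnz by (simp add: prod_eq_iff)
  qed
  show ?thesis
    using V_dim_image_eq[OF lin inj] sec by (simp add: G3_h0_def S0_def)
qed




lemma sections_swap:
  assumes "\<forall>i<3. lam i \<noteq> 0"
  shows "G3_sections da db p q lam = prod.swap ` G3_sections db da q p (\<lambda>i. inverse (lam i))"
proof -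
  have *: "(f, g) \<in> G3_sections da db p q lam \<longleftrightarrow> (g, f) \<in> G3_sections db da q p (\<lambda>i. inverse (lam i))" for f g
  proof -
    have "form_eval da f (p i) = lam i * form_eval db g (q i) \<longleftrightarrow>
          form_eval db g (q i) = inverse (lam i) * form_eval da f (p i)" if "i < 3" for i
      using assms that by (auto simp: field_simps)
    then show ?thesis unfolding G3_sections_def by auto
  qed
  show ?thesis
  proof (intro equalityI subsetI)
    fix x assume "x \<in> G3_sections da db p q lam"
    then show "x \<in> prod.swap ` G3_sections db da q p (\<lambda>i. inverse (lam i))"
      using * by (cases x) (auto simp: image_iff intro!: bexI[of _ "prod.swap x"])
  next
    fix x assume "x \<in> prod.swap ` G3_sections db da q p (\<lambda>i. inverse (lam i))"
    then show "x \<in> G3_sections da db p q lam" using * by auto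
  qed
qed

lemma config_swap: "G3_config p q lam \<Longrightarrow> G3_config q p (\<lambda>i. inverse (lam i))"
  by (simp add: G3_config_def)

lemma h0_swap:
  assumes c: "G3_config p q lam"
  shows "G3_h0 da db p q lam = G3_h0 db da q p (\<lambda>i. inverse (lam i))"
proof -
  have lin: "Vector_Spaces.linear pair_smult pair_smult prod.swap"
    by (rule linear_pairI) (auto simp: pair_smult_def)
  have inj: "inj_on prod.swap X" for X by (rule inj_onI) auto
  have "\<forall>i<3. lam i \<noteq> 0" using c by (simp add: G3_config_def)
  then have "G3_sections da db p q lam = prod.swap ` G3_sections db da q p (\<lambda>i. inverse (lam i))"
    by (rule sections_swap)
  then show ?thesis
    unfolding G3_h0_def using V_dim_image_eq[OF lin inj] by simp
qed

lemma jumping_swap: "G3_jumping da db \<Longrightarrow> G3_jumping db da"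
  unfolding G3_jumping_def using h0_swap config_swap by metis

lemma nonjumping:
  assumes "da < 0 \<or> 2 \<le> da"
  shows "\<not> G3_jumping da db"
  using assms h0_ge2 h0_neg unfolding G3_jumping_def by metis

definition P :: "nat \<Rightarrow> complex \<times> complex" where
  "P i = (if i = 0 then (0,1) else if i = 1 then (1,0) else (1,1))"

lemma config_P: "(\<forall>i<3. lam i \<noteq> 0) \<Longrightarrow> G3_config P P lam"
  by (auto simp: G3_config_def proj_distinct_def P_def less3)

lemma sections3: "(f, g) \<in> G3_sections da db p q lam \<longleftrightarrow> f \<in> forms da \<and> g \<in> forms db \<and>
   form_eval da f (p 0) = lam 0 * form_eval db g (q 0) \<and>
   form_eval da f (p 1) = lam 1 * form_eval db g (q 1) \<and>
   form_eval da f (p 2) = lam 2 * form_eval db g (q 2)"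
  by (auto simp: G3_sections_def less3)

lemma forms0_eq: "f \<in> forms 0 \<Longrightarrow> f = [:coeff f 0:]"
  by (rule poly_eqI) (auto simp: forms_def coeff_pCons coeff_eq_0 split: nat.split)

lemma forms1_eq: "f \<in> forms 1 \<Longrightarrow> f = [:coeff f 0, coeff f 1:]"
  by (rule poly_eqI) (auto simp: forms_def coeff_pCons coeff_eq_0 split: nat.split)

lemma eval0: "form_eval 0 f v = coeff f 0"
  by (simp add: form_eval_def)

lemma eval1: "form_eval 1 f (a, b) = coeff f 0 * b + coeff f 1 * a"
  by (simp add: form_eval_def)

lemma P_simps: "P 0 = (0,1)" "P 1 = (1,0)" "P 2 = (1,1)"
  by (simp_all add: P_def)

lemma dim_zero: "V.dim {0} = 0"
  by (metis V.dim_span V.span_empty V.dim_eq_card_independent V.independent_empty card.empty)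

lemma dim_one: "x \<noteq> 0 \<Longrightarrow> V.dim (V.span {x}) = 1"
  using V.dim_span_eq_card_independent[of "{x}"] V.dependent_single[of x] by simp




definition lam1 :: "nat \<Rightarrow> complex" where "lam1 i = 1"
definition lam2 :: "nat \<Rightarrow> complex" where "lam2 i = (if i = 2 then 2 else 1)"

lemma lam_simps: "lam1 i = 1" "lam2 0 = 1" "lam2 1 = 1" "lam2 2 = 2"
  by (simp_all add: lam1_def lam2_def)

lemma lam2_Suc0[simp]: "lam2 (Suc 0) = 1" by (simp add: lam2_def)
lemma P_Suc0[simp]: "P (Suc 0) = (1, 0)" by (simp add: P_def)

lemma ar1: "(a::complex) = b \<Longrightarrow> a = 2*b \<Longrightarrow> a = 0 \<and> b = 0"
  by (metis add_cancel_right_right mult_2)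
lemma ar2: "(a::complex) = c \<Longrightarrow> b = c \<Longrightarrow> a + b = c \<Longrightarrow> a = 0 \<and> b = 0 \<and> c = 0"
  by (metis add_cancel_right_right)
lemma ar3: "(a::complex) = c \<Longrightarrow> b = d \<Longrightarrow> a + b = 2 * (c + d) \<Longrightarrow> b = - a \<and> c = a \<and> d = - a"
  by (metis add.commute add_cancel_right_right add_eq_0_iff mult_2)

lemma config1: "G3_config P P lam1" by (rule config_P) (simp add: lam1_def)
lemma config2: "G3_config P P lam2" by (rule config_P) (simp add: lam2_def)

lemma forms0_iff: "[:c:] \<in> forms 0" by (simp add: forms_def)
lemma forms1_iff: "[:c, d:] \<in> forms 1" by (simp add: forms_def)

lemma J00: "G3_jumping 0 0"
proof -
  define x :: "complex poly \<times> complex poly" where "x = ([:1:], [:1:])"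
  have A: "G3_sections 0 0 P P lam1 = V.span {x}"
    unfolding V.span_singleton
  proof (intro equalityI subsetI)
    fix y assume y: "y \<in> G3_sections 0 0 P P lam1"
    obtain f g where yfg: "y = (f, g)" by (cases y)
    have f: "f = [:coeff f 0:]" and g: "g = [:coeff g 0:]" using y yfg forms0_eq by (auto simp: sections3)
    have "coeff f 0 = coeff g 0" using y yfg by (simp add: sections3 eval0 lam_simps)
    then have "y = pair_smult (coeff f 0) x" using f g yfg by (simp add: x_def pair_smult_def)
    then show "y \<in> range (\<lambda>k. pair_smult k x)" by blast
  next
    fix y assume "y \<in> range (\<lambda>k. pair_smult k x)"
    then obtain k where "y = ([:k:], [:k:])" by (auto simp: x_def pair_smult_def)
    then show "y \<in> G3_sections 0 0 P P lam1"
      by (simp add: sections3 eval0 lam_simps forms0_iff)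
  qed
  have B: "G3_sections 0 0 P P lam2 = {0}"
  proof (intro equalityI subsetI)
    fix y assume y: "y \<in> G3_sections 0 0 P P lam2"
    obtain f g where yfg: "y = (f, g)" by (cases y)
    have f: "f = [:coeff f 0:]" and g: "g = [:coeff g 0:]" using y yfg forms0_eq by (auto simp: sections3)
    have "coeff f 0 = coeff g 0 \<and> coeff f 0 = 2 * coeff g 0" using y unfolding yfg sections3 eval0 lam_simps mult_1_left mult_1_right by blast
    then have "coeff f 0 = 0" "coeff g 0 = 0" using ar1 by blast+
    then show "y \<in> {0}" using f g yfg by (simp add: zero_prod_def)
  next
    fix y assume "y \<in> {(0 :: complex poly \<times> complex poly)}"
    then show "y \<in> G3_sections 0 0 P P lam2" by (simp add: zero_prod_def sections3)
  qed
  have "G3_h0 0 0 P P lam1 = 1" unfolding G3_h0_def A by (rule dim_one) (simp add: x_def zero_prod_def)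
  moreover have "G3_h0 0 0 P P lam2 = 0" unfolding G3_h0_def B by (rule dim_zero)
  ultimately show ?thesis unfolding G3_jumping_def using config1 config2 by (metis zero_neq_one)
qed

lemma J10: "G3_jumping 1 0"
proof -
  define x :: "complex poly \<times> complex poly" where "x = ([:1, 1:], [:1:])"
  have A: "G3_sections 1 0 P P lam2 = V.span {x}"
    unfolding V.span_singleton
  proof (intro equalityI subsetI)
    fix y assume y: "y \<in> G3_sections 1 0 P P lam2"
    obtain f g where yfg: "y = (f, g)" by (cases y)
    have f: "f = [:coeff f 0, coeff f 1:]" and g: "g = [:coeff g 0:]"
      using y yfg forms0_eq forms1_eq by (auto simp: sections3)
    have "coeff f 0 = coeff g 0" "coeff f 1 = coeff g 0"
      using y yfg by (simp_all add: sections3 eval0 eval1 lam_simps P_simps)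
    then have "y = pair_smult (coeff g 0) x" using f g yfg by (simp add: x_def pair_smult_def)
    then show "y \<in> range (\<lambda>k. pair_smult k x)" by blast
  next
    fix y assume "y \<in> range (\<lambda>k. pair_smult k x)"
    then obtain k where "y = ([:k, k:], [:k:])" by (auto simp: x_def pair_smult_def)
    then show "y \<in> G3_sections 1 0 P P lam2"
      by (simp add: sections3 eval0 eval1 lam_simps P_simps forms0_iff forms1_iff)
  qed
  have B: "G3_sections 1 0 P P lam1 = {0}"
  proof (intro equalityI subsetI)
    fix y assume y: "y \<in> G3_sections 1 0 P P lam1"
    obtain f g where yfg: "y = (f, g)" by (cases y)
    have f: "f = [:coeff f 0, coeff f 1:]" and g: "g = [:coeff g 0:]"
      using y yfg forms0_eq forms1_eq by (auto simp: sections3)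
    have "coeff f 0 = coeff g 0 \<and> coeff f 1 = coeff g 0 \<and> coeff f 0 + coeff f 1 = coeff g 0"
      using y unfolding yfg sections3 eval0 eval1 lam_simps P_simps mult_1_left mult_1_right
         mult_zero_right add_0_right add_0_left by blast
    then have "coeff f 0 = 0" "coeff f 1 = 0" "coeff g 0 = 0" using ar2 by blast+
    then show "y \<in> {0}" using f g yfg by (simp add: zero_prod_def)
  next
    fix y assume "y \<in> {(0 :: complex poly \<times> complex poly)}"
    then show "y \<in> G3_sections 1 0 P P lam1" by (simp add: zero_prod_def sections3)
  qed
  have "G3_h0 1 0 P P lam2 = 1" unfolding G3_h0_def A by (rule dim_one) (simp add: x_def zero_prod_def)
  moreover have "G3_h0 1 0 P P lam1 = 0" unfolding G3_h0_def B by (rule dim_zero)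
  ultimately show ?thesis unfolding G3_jumping_def using config1 config2 by (metis zero_neq_one)
qed

lemma J11: "G3_jumping 1 1"
proof -
  define x :: "complex poly \<times> complex poly" where "x = ([:1, -1:], [:1, -1:])"
  have A: "G3_sections 1 1 P P lam2 = V.span {x}"
    unfolding V.span_singleton
  proof (intro equalityI subsetI)
    fix y assume y: "y \<in> G3_sections 1 1 P P lam2"
    obtain f g where yfg: "y = (f, g)" by (cases y)
    have f: "f = [:coeff f 0, coeff f 1:]" and g: "g = [:coeff g 0, coeff g 1:]"
      using y yfg forms1_eq by (auto simp: sections3)
    have "coeff f 0 = coeff g 0 \<and> coeff f 1 = coeff g 1 \<and>
      coeff f 0 + coeff f 1 = 2 * (coeff g 0 + coeff g 1)"
      using y unfolding yfg sections3 eval1 lam_simps P_simps mult_1_left mult_1_right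
         mult_zero_right add_0_right add_0_left by blast
    then have "coeff f 1 = - coeff f 0" "coeff g 0 = coeff f 0" "coeff g 1 = - coeff f 0" using ar3 by blast+
    then have "y = pair_smult (coeff f 0) x" using f g yfg by (simp add: x_def pair_smult_def)
    then show "y \<in> range (\<lambda>k. pair_smult k x)" by blast
  next
    fix y assume "y \<in> range (\<lambda>k. pair_smult k x)"
    then obtain k where "y = ([:k, -k:], [:k, -k:])" by (auto simp: x_def pair_smult_def)
    then show "y \<in> G3_sections 1 1 P P lam2"
      by (simp add: sections3 eval1 lam_simps P_simps forms1_iff)
  qed
  define a :: "complex poly \<times> complex poly" where "a = ([:1:], [:1:])"
  define b :: "complex poly \<times> complex poly" where "b = ([:0, 1:], [:0, 1:])"
  have B: "V.dim (G3_sections 1 1 P P lam1) = 2"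
  proof (rule V.dim_unique[of "{a, b}"])
    show "{a, b} \<subseteq> G3_sections 1 1 P P lam1"
      by (simp add: a_def b_def sections3 eval1 lam_simps P_simps forms_def)
    show "G3_sections 1 1 P P lam1 \<subseteq> V.span {a, b}"
    proof
      fix y assume y: "y \<in> G3_sections 1 1 P P lam1"
      obtain f g where yfg: "y = (f, g)" by (cases y)
      have f: "f = [:coeff f 0, coeff f 1:]" and g: "g = [:coeff g 0, coeff g 1:]"
        using y yfg forms1_eq by (auto simp: sections3)
      have "coeff f 0 = coeff g 0" "coeff f 1 = coeff g 1"
        using y yfg by (simp_all add: sections3 eval1 lam_simps P_simps)
      then have "y = pair_smult (coeff f 0) a + pair_smult (coeff f 1) b"
        using f g yfg by (simp add: a_def b_def pair_smult_def)
      moreover have "pair_smult (coeff f 0) a + pair_smult (coeff f 1) b \<in> V.span {a, b}"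
        by (intro V.span_add V.span_scale V.span_base) auto
      ultimately show "y \<in> V.span {a, b}" by simp
    qed
    have "a \<notin> V.span {b}"
      unfolding V.span_singleton by (auto simp: a_def b_def pair_smult_def)
    moreover have "b \<noteq> 0" by (simp add: b_def zero_prod_def)
    ultimately show "V.independent {a, b}"
      using V.independent_insert[of a "{b}"] V.dependent_single[of b] by (auto simp: a_def b_def)
    show "card {a, b} = 2" by (simp add: a_def b_def)
  qed
  have "G3_h0 1 1 P P lam2 = 1" unfolding G3_h0_def A by (rule dim_one) (simp add: x_def zero_prod_def)
  moreover have "G3_h0 1 1 P P lam1 = 2" unfolding G3_h0_def B ..
  ultimately show ?thesis unfolding G3_jumping_def using config1 config2 by (metis numeral_One numeral_eq_iff semiring_norm(85))
qed

theorem mainTheorem10: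
  fixes da db :: int
  shows "G3_jumping da db \<longleftrightarrow> (0 \<le> da \<and> da \<le> 1 \<and> 0 \<le> db \<and> db \<le> 1)"
proof
  assume j: "G3_jumping da db"
  have "0 \<le> da \<and> da \<le> 1" using nonjumping[of da db] j by linarith
  moreover have "0 \<le> db \<and> db \<le> 1" using nonjumping[of db da] jumping_swap[OF j] by linarith
  ultimately show "0 \<le> da \<and> da \<le> 1 \<and> 0 \<le> db \<and> db \<le> 1" by simp
next
  assume "0 \<le> da \<and> da \<le> 1 \<and> 0 \<le> db \<and> db \<le> 1"
  then have "(da = 0 \<or> da = 1) \<and> (db = 0 \<or> db = 1)" by auto
  then show "G3_jumping da db" using J00 J10 J11 jumping_swap[OF J10] by auto
qed



end
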